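(* Let $H$ be a real Hilbert space, $A:H\to c_0$ bounded linear with adjoint $A^*:\ell^1\to H$ (identifying $c_0^*=\ell^1$), with $A$ and $A^*$ injective. Let $(H_n)_{n\in\mathbb N}$ be subspaces of $H$ with $\dim H_n=n$ whose orthogonal projections $P_n$ satisfy $P_nv\to v$ for all $v\in H$. Let $f\in H$, $u^\dagger\in\ell^1$ with $A^*u^\dagger=f$, and suppose there is $v^\dagger\in H$ with $\|Av^\dagger\|_\infty\le1$, $(Av^\dagger)_i=\operatorname{sign}(u^\dagger_i)$ whenever $u^\dagger_i\ne0$, and $|(Av^\dagger)_i|=1$ if and only if $i\in\operatorname{supp}u^\dagger$. Then there is $n_0\in\mathbb N$ such that for all $n\ge n_0$: (i) $u^\dagger$ is the unique solution of $\min\{\|u\|_1: u\in\ell^1,\ P_nA^*u=P_nf\}$; (ii) there is $v^{\dagger,n}\in H_n$ with $\|Av^{\dagger,n}\|_\infty\le1$, $|(Av^{\dagger,n})_i|=1$ if and only if $i\in\operatorname{supp}u^\dagger$, and $\varepsilon_{v^{\dagger,n}}\ge\frac12\varepsilon_{v^\dagger}$.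
   Context: $A^*$ is defined by $\langle A^*u,z\rangle=\sum_iu_i(Az)_i$. $\operatorname{supp}u=\{i:u_i\ne0\}$. For $v\in H$, $\varepsilon_v=1-\max_{i\notin\operatorname{supp}u^\dagger}|(Av)_i|$. *)

theory Defs
  imports "HOL-Analysis.Analysis"
begin

definition c0 :: "(nat \<Rightarrow> real) set" where
  "c0 = {x. x \<longlonglongrightarrow> 0}"

definition l1 :: "(nat \<Rightarrow> real) set" where
  "l1 = {u. summable (\<lambda>i. \<bar>u i\<bar>)}"

definition norm1 :: "(nat \<Rightarrow> real) \<Rightarrow> real" where
  "norm1 u = (\<Sum>i. \<bar>u i\<bar>)"

definition supp :: "(nat \<Rightarrow> real) \<Rightarrow> nat set" where
  "supp u = {i. u i \<noteq> 0}"

definition orth_proj :: "'a::real_inner set \<Rightarrow> 'a \<Rightarrow> 'a" where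
  "orth_proj S v = (THE p. p \<in> S \<and> (\<forall>w\<in>S. inner (v - p) w = 0))"

definition bounded_linear_c0 :: "('a::real_normed_vector \<Rightarrow> (nat \<Rightarrow> real)) \<Rightarrow> bool" where
  "bounded_linear_c0 A \<longleftrightarrow> (\<forall>i. linear (\<lambda>v. A v i)) \<and> (\<forall>v. A v \<in> c0) \<and>
     (\<exists>C. \<forall>v i. \<bar>A v i\<bar> \<le> C * norm v)"

definition is_adjoint :: "('a::real_inner \<Rightarrow> (nat \<Rightarrow> real)) \<Rightarrow> ((nat \<Rightarrow> real) \<Rightarrow> 'a) \<Rightarrow> bool" where
  "is_adjoint A As \<longleftrightarrow> (\<forall>u\<in>l1. \<forall>z. inner (As u) z = (\<Sum>i. u i * A z i))"

text \<open>epsilon_v = 1 - max over i not in supp u of |(Av)_i|; the maximum is taken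
  as a supremum including 0 (equal to the max whenever the index set is nonempty,
  since |(Av)_i| >= 0; equals 0 if the complement of the support is empty).\<close>
definition eps :: "('a \<Rightarrow> (nat \<Rightarrow> real)) \<Rightarrow> (nat \<Rightarrow> real) \<Rightarrow> 'a \<Rightarrow> real" where
  "eps A u v = 1 - Sup (insert 0 ((\<lambda>i. \<bar>A v i\<bar>) ` (- supp u)))"

definition is_l1_min :: "((nat \<Rightarrow> real) \<Rightarrow> bool) \<Rightarrow> (nat \<Rightarrow> real) \<Rightarrow> bool" where
  "is_l1_min feas u \<longleftrightarrow> u \<in> l1 \<and> feas u \<and> (\<forall>w\<in>l1. feas w \<longrightarrow> norm1 u \<le> norm1 w)"

end

theory Submission
  imports Defs
begin


lemma proj_exists_span:
  fixes B :: "'a::real_inner set"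
  assumes "finite B"
  shows "\<forall>v. \<exists>p\<in>span B. \<forall>w\<in>span B. inner (v - p) w = 0"
  using assms
proof (induction B rule: finite_induct)
  case empty
  then show ?case by auto
next
  case (insert b B)
  show ?case
  proof
    fix v
    obtain p where p: "p \<in> span B" "\<forall>w\<in>span B. inner (v - p) w = 0"
      using insert.IH by blast
    obtain q where q: "q \<in> span B" "\<forall>w\<in>span B. inner (b - q) w = 0"
      using insert.IH by blast
    show "\<exists>p\<in>span (insert b B). \<forall>w\<in>span (insert b B). inner (v - p) w = 0"
    proof (cases "b - q = 0")
      case True
      then have "b \<in> span B" using q by simp
      then have "span (insert b B) = span B" by (rule span_redundant)
      then show ?thesis using p by auto
    next
      case False
      define b' where "b' = b - q"
      define al where "al = inner (v - p) b' / inner b' b'"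
      define p' where "p' = p + al *\<^sub>R b'"
      have bb: "inner b' b' \<noteq> 0" using False b'_def by simp
      have sp: "span B \<subseteq> span (insert b B)" by (rule span_mono) auto
      have "p' \<in> span (insert b B)"
        unfolding p'_def b'_def
        using p(1) q(1) sp by (intro span_add span_scale span_diff) (auto intro: span_base)
      moreover have "\<forall>w\<in>span (insert b B). inner (v - p') w = 0"
      proof
        fix w assume "w \<in> span (insert b B)"
        then obtain k where k: "w - k *\<^sub>R b \<in> span B" by (auto simp: span_insert)
        have o1: "inner (v - p') w0 = 0" if "w0 \<in> span B" for w0
        proof -
          have "inner b' w0 = 0" using q that b'_def by simp
          then show ?thesis using p that unfolding p'_def
            by (simp add: inner_diff_left inner_add_left)
        qed
        have o2: "inner (v - p') b' = 0"
          using bb unfolding p'_def al_def by (simp add: inner_diff_left inner_add_left)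
        have "inner (v - p') b = inner (v - p') b' + inner (v - p') q"
          unfolding b'_def by (simp add: inner_diff_right)
        then have o3: "inner (v - p') b = 0" using o1[OF q(1)] o2 by simp
        have "w = (w - k *\<^sub>R b) + k *\<^sub>R b" by simp
        then have "inner (v - p') w = inner (v - p') (w - k *\<^sub>R b) + k * inner (v - p') b"
          by (metis inner_add_right inner_scaleR_right)
        then show "inner (v - p') w = 0" using o1[OF k] o3 by simp
      qed
      ultimately show ?thesis by blast
    qed
  qed
qed

lemma orth_proj_prop:
  fixes S :: "'a::real_inner set"
  assumes "subspace S" and ex: "\<exists>p\<in>S. \<forall>w\<in>S. inner (v - p) w = 0"
  shows "orth_proj S v \<in> S \<and> (\<forall>w\<in>S. inner (v - orth_proj S v) w = 0)"
proof -
  have "\<exists>!p. p \<in> S \<and> (\<forall>w\<in>S. inner (v - p) w = 0)"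
  proof (rule ex_ex1I)
    show "\<exists>p. p \<in> S \<and> (\<forall>w\<in>S. inner (v - p) w = 0)" using ex by blast
  next
    fix p1 p2 assume a: "p1 \<in> S \<and> (\<forall>w\<in>S. inner (v - p1) w = 0)"
      "p2 \<in> S \<and> (\<forall>w\<in>S. inner (v - p2) w = 0)"
    have d: "p1 - p2 \<in> S" using a assms(1) by (simp add: subspace_diff)
    have "inner (p1 - p2) (p1 - p2) = inner (v - p2) (p1 - p2) - inner (v - p1) (p1 - p2)"
      by (simp add: inner_diff_left)
    also have "\<dots> = 0" using a d by simp
    finally show "p1 = p2" by simp
  qed
  then show ?thesis unfolding orth_proj_def by (rule theI')
qed

lemma orth_proj_fin:
  fixes S :: "'a::real_inner set"
  assumes "subspace S" "dim S = n" "n \<ge> 1"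
  shows "orth_proj S v \<in> S \<and> (\<forall>w\<in>S. inner (v - orth_proj S v) w = 0)"
proof -
  obtain B where B: "B \<subseteq> S" "independent B" "S \<subseteq> span B" "card B = dim S"
    by (rule basis_exists)
  have fin: "finite B" using B(4) assms by (metis card.infinite not_one_le_zero)
  have "span B \<subseteq> S" using B(1) assms(1) by (simp add: span_minimal)
  then have SB: "S = span B" using B(3) by blast
  show ?thesis
    apply (rule orth_proj_prop[OF assms(1)])
    using proj_exists_span[OF fin] SB by blast
qed


definition lc :: "(nat \<Rightarrow> 'a::real_vector) \<Rightarrow> nat set \<Rightarrow> 'a \<Rightarrow> bool" where
  "lc a T x \<longleftrightarrow> (\<exists>\<beta>. x = (\<Sum>i\<in>T. \<beta> i *\<^sub>R a i))"

definition indep_on :: "(nat \<Rightarrow> 'a::real_vector) \<Rightarrow> nat set \<Rightarrow> bool" where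
  "indep_on a T \<longleftrightarrow> (\<forall>c. (\<Sum>i\<in>T. c i *\<^sub>R a i) = 0 \<longrightarrow> (\<forall>i\<in>T. c i = 0))"

lemma lc_add: "lc a T x \<Longrightarrow> lc a T y \<Longrightarrow> lc a T (x + y)"
  unfolding lc_def
proof (elim exE)
  fix b1 b2 assume "x = (\<Sum>i\<in>T. b1 i *\<^sub>R a i)" "y = (\<Sum>i\<in>T. b2 i *\<^sub>R a i)"
  then have "x + y = (\<Sum>i\<in>T. (b1 i + b2 i) *\<^sub>R a i)"
    by (simp add: scaleR_add_left sum.distrib)
  then show "\<exists>\<beta>. x + y = (\<Sum>i\<in>T. \<beta> i *\<^sub>R a i)" by (rule exI[of _ "\<lambda>i. b1 i + b2 i"])
qed

lemma lc_scale: "lc a T x \<Longrightarrow> lc a T (r *\<^sub>R x)"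
  unfolding lc_def
proof (elim exE)
  fix b1 assume "x = (\<Sum>i\<in>T. b1 i *\<^sub>R a i)"
  then have "r *\<^sub>R x = (\<Sum>i\<in>T. (r * b1 i) *\<^sub>R a i)"
    by (simp add: scaleR_sum_right)
  then show "\<exists>\<beta>. r *\<^sub>R x = (\<Sum>i\<in>T. \<beta> i *\<^sub>R a i)" by (rule exI[of _ "\<lambda>i. r * b1 i"])
qed

lemma lc_diff: "lc a T x \<Longrightarrow> lc a T y \<Longrightarrow> lc a T (x - y)"
  using lc_add[of a T x "(-1) *\<^sub>R y"] lc_scale[of a T y "-1"] by simp

lemma lc_zero: "lc a T 0"
  unfolding lc_def by (rule exI[of _ "\<lambda>_. 0"]) simp

lemma lc_sum: "(\<And>j. j \<in> J \<Longrightarrow> lc a T (f j)) \<Longrightarrow> lc a T (\<Sum>j\<in>J. f j)"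
  by (induction J rule: infinite_finite_induct) (auto simp: lc_zero lc_add)

lemma lc_base:
  assumes "finite T" "i \<in> T" shows "lc a T (a i)"
proof -
  have "(\<Sum>j\<in>T. (if j = i then 1 else 0) *\<^sub>R a j) = (\<Sum>j\<in>T. if j = i then a j else 0)"
    by (intro sum.cong) auto
  also have "\<dots> = a i" using assms by (simp add: sum.delta')
  finally have "a i = (\<Sum>j\<in>T. (if j = i then 1 else 0) *\<^sub>R a j)" by simp
  then show ?thesis unfolding lc_def by - (rule exI[of _ "\<lambda>j. if j = i then 1 else 0"], assumption)
qed

lemma lc_insert: "finite S \<Longrightarrow> m \<notin> S \<Longrightarrow> lc a S x \<Longrightarrow> lc a (insert m S) x"
  unfolding lc_def
proof (elim exE)
  fix b assume fs: "finite S" "m \<notin> S" and x: "x = (\<Sum>i\<in>S. b i *\<^sub>R a i)"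
  have "(\<Sum>i\<in>insert m S. (b(m:=0)) i *\<^sub>R a i) = (\<Sum>i\<in>S. (b(m:=0)) i *\<^sub>R a i)"
    using fs by simp
  also have "\<dots> = x" unfolding x using fs(2) by (intro sum.cong) auto
  finally show "\<exists>\<beta>. x = (\<Sum>i\<in>insert m S. \<beta> i *\<^sub>R a i)" by metis
qed

lemma lc_orth: "lc a T x \<Longrightarrow> (\<And>i. i \<in> T \<Longrightarrow> inner (a i) y = 0) \<Longrightarrow> inner x y = 0"
  unfolding lc_def by (auto simp: inner_sum_left)

lemma indep_insert: "finite S \<Longrightarrow> m \<notin> S \<Longrightarrow> indep_on a (insert m S) \<Longrightarrow> indep_on a S"
  unfolding indep_on_def
proof (intro allI impI)
  fix c assume fs: "finite S" "m \<notin> S" and ind: "\<forall>c. (\<Sum>i\<in>insert m S. c i *\<^sub>R a i) = 0 \<longrightarrow> (\<forall>i\<in>insert m S. c i = 0)"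
    and z: "(\<Sum>i\<in>S. c i *\<^sub>R a i) = 0"
  have "(\<Sum>i\<in>insert m S. (c(m:=0)) i *\<^sub>R a i) = (\<Sum>i\<in>S. (c(m:=0)) i *\<^sub>R a i)"
    using fs by simp
  also have "\<dots> = (\<Sum>i\<in>S. c i *\<^sub>R a i)" using fs(2) by (intro sum.cong) auto
  finally have "\<forall>i\<in>insert m S. (c(m:=0)) i = 0" using ind z by metis
  then show "\<forall>i\<in>S. c i = 0" using fs(2) by (metis fun_upd_other insertCI)
qed

lemma indep_ne: "finite S \<Longrightarrow> m \<notin> S \<Longrightarrow> indep_on a (insert m S) \<Longrightarrow> lc a S x \<Longrightarrow> a m - x \<noteq> 0"
proof
  assume fs: "finite S" "m \<notin> S" and ind: "indep_on a (insert m S)" and l: "lc a S x" and z: "a m - x = 0"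
  obtain b where x: "x = (\<Sum>i\<in>S. b i *\<^sub>R a i)" using l unfolding lc_def by blast
  define c where "c = (\<lambda>i. if i = m then 1 else - b i)"
  have "(\<Sum>i\<in>insert m S. c i *\<^sub>R a i) = a m + (\<Sum>i\<in>S. c i *\<^sub>R a i)"
    using fs by (simp add: c_def)
  also have "(\<Sum>i\<in>S. c i *\<^sub>R a i) = - x" unfolding x c_def using fs(2)
    by (auto simp: sum_negf[symmetric] intro!: sum.cong)
  finally have "(\<Sum>i\<in>insert m S. c i *\<^sub>R a i) = 0" using z by simp
  then have "c m = 0" using ind unfolding indep_on_def by blast
  then show False by (simp add: c_def)
qed

lemma lim_const_ev: "eventually (\<lambda>n. f n = k) sequentially \<Longrightarrow> f \<longlonglongrightarrow> L \<Longrightarrow> L = (k::real)"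
  using tendsto_eventually[of f k sequentially] LIMSEQ_unique by blast



lemma delta_sum: "finite S \<Longrightarrow> i \<in> S \<Longrightarrow> (\<Sum>j\<in>S. f j * (if i = j then 1 else 0)) = (f i::real)"
proof -
  assume "finite S" "i \<in> S"
  have "(\<Sum>j\<in>S. f j * (if i = j then 1 else 0)) = (\<Sum>j\<in>S. if i = j then f j else 0)"
    by (intro sum.cong) auto
  also have "\<dots> = f i" using \<open>finite S\<close> \<open>i \<in> S\<close> by (simp add: sum.delta)
  finally show ?thesis .
qed

lemma dual_seq:
  fixes a :: "nat \<Rightarrow> 'h::real_inner" and H :: "nat \<Rightarrow> 'h set" and Q :: "nat \<Rightarrow> 'h \<Rightarrow> 'h"
  assumes fin: "finite S" and sub: "\<And>n. subspace (H n)"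
    and QH: "eventually (\<lambda>n. \<forall>x. Q n x \<in> H n) sequentially"
    and Qc: "\<And>x. (\<lambda>n. Q n x) \<longlonglongrightarrow> x"
  shows "indep_on a S \<Longrightarrow> \<exists>c b. (\<forall>j\<in>S. lc a S (b j)) \<and> (\<forall>j\<in>S. (\<lambda>n. c n j) \<longlonglongrightarrow> b j) \<and>
     eventually (\<lambda>n. \<forall>j\<in>S. c n j \<in> H n \<and> (\<forall>i\<in>S. inner (a i) (c n j) = (if i = j then 1 else 0))) sequentially"
  using fin
proof (induction S rule: finite_induct)
  case empty
  show ?case by auto
next
  case (insert m S)
  have indS: "indep_on a S" using indep_insert insert.hyps insert.prems by blast
  obtain c b where lcb: "\<forall>j\<in>S. lc a S (b j)" and cb: "\<forall>j\<in>S. (\<lambda>n. c n j) \<longlonglongrightarrow> b j"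
    and ev: "eventually (\<lambda>n. \<forall>j\<in>S. c n j \<in> H n \<and> (\<forall>i\<in>S. inner (a i) (c n j) = (if i = j then 1 else 0))) sequentially"
    using insert.IH[OF indS] by blast
  define t where "t j = inner (a j) (a m)" for j
  define x where "x n = Q n (a m)" for n
  define g where "g n = x n - (\<Sum>j\<in>S. inner (a j) (x n) *\<^sub>R c n j)" for n
  define y where "y = (\<Sum>j\<in>S. t j *\<^sub>R b j)"
  define gl where "gl = a m - y"
  have xl: "x \<longlonglongrightarrow> a m" unfolding x_def by (rule Qc)
  have gl_lim: "g \<longlonglongrightarrow> gl"
    unfolding g_def gl_def y_def t_def
    by (intro tendsto_intros xl) (use cb in auto)
  have bd: "inner (a i) (b j) = (if i = j then 1 else 0)" if "i \<in> S" "j \<in> S" for i j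
  proof (rule lim_const_ev)
    show "eventually (\<lambda>n. inner (a i) (c n j) = (if i = j then 1 else 0)) sequentially"
      using ev that by (auto elim: eventually_mono)
    show "(\<lambda>n. inner (a i) (c n j)) \<longlonglongrightarrow> inner (a i) (b j)"
      using cb that by (intro tendsto_intros) auto
  qed
  have ortho: "inner (a i) gl = 0" if "i \<in> S" for i
  proof -
    have "inner (a i) y = (\<Sum>j\<in>S. t j * inner (a i) (b j))"
      unfolding y_def by (simp add: inner_sum_right)
    also have "\<dots> = (\<Sum>j\<in>S. t j * (if i = j then 1 else 0))"
      using bd that by (intro sum.cong) auto
    also have "\<dots> = t i" by (rule delta_sum[OF insert.hyps(1) that])
    finally show ?thesis unfolding gl_def t_def by (simp add: inner_diff_right inner_commute)
  qed
  have lcy: "lc a S y" unfolding y_def using lcb by (intro lc_sum lc_scale) auto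
  have glne: "gl \<noteq> 0" unfolding gl_def by (rule indep_ne[OF insert.hyps(1,2) insert.prems lcy])
  have "inner y gl = 0" using lc_orth[OF lcy] ortho by blast
  then have gam: "inner (a m) gl = inner gl gl" unfolding gl_def by (simp add: inner_diff_left)
  define \<gamma> where "\<gamma> = inner (a m) gl"
  have gpos: "\<gamma> > 0" unfolding \<gamma>_def gam using glne by simp
  define dn where "dn n = inner (a m) (g n)" for n
  have dl: "dn \<longlonglongrightarrow> \<gamma>" unfolding dn_def \<gamma>_def by (intro tendsto_intros gl_lim)
  have ev2: "eventually (\<lambda>n. dn n \<noteq> 0) sequentially"
    using tendsto_imp_eventually_ne[OF dl] gpos by simp
  define e where "e n = (1 / dn n) *\<^sub>R g n" for n
  define el where "el = (1 / \<gamma>) *\<^sub>R gl"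
  have el_lim: "e \<longlonglongrightarrow> el" unfolding e_def el_def
    using gpos by (intro tendsto_intros dl gl_lim) auto
  define c' where "c' n j = (if j = m then e n else c n j - inner (a m) (c n j) *\<^sub>R e n)" for n j
  define b' where "b' j = (if j = m then el else b j - inner (a m) (b j) *\<^sub>R el)" for j
  have lcel: "lc a (insert m S) el"
    unfolding el_def gl_def
    using insert.hyps lcy by (intro lc_scale lc_diff lc_base lc_insert) auto
  have "\<forall>j\<in>insert m S. lc a (insert m S) (b' j)"
  proof
    fix j assume j: "j \<in> insert m S"
    show "lc a (insert m S) (b' j)"
    proof (cases "j = m")
      case True then show ?thesis using lcel b'_def by simp
    next
      case False
      then have "j \<in> S" using j by auto
      then show ?thesis unfolding b'_def using False lcb insert.hyps lcel
        by (auto intro!: lc_diff lc_scale lc_insert)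
    qed
  qed
  moreover have "\<forall>j\<in>insert m S. (\<lambda>n. c' n j) \<longlonglongrightarrow> b' j"
  proof
    fix j assume j: "j \<in> insert m S"
    show "(\<lambda>n. c' n j) \<longlonglongrightarrow> b' j"
    proof (cases "j = m")
      case True then show ?thesis using el_lim unfolding c'_def b'_def by simp
    next
      case False
      then have "j \<in> S" using j by auto
      then have "(\<lambda>n. c n j - inner (a m) (c n j) *\<^sub>R e n) \<longlonglongrightarrow> b j - inner (a m) (b j) *\<^sub>R el"
        using cb el_lim by (intro tendsto_intros) auto
      then show ?thesis unfolding c'_def b'_def using False by simp
    qed
  qed
  moreover have "eventually (\<lambda>n. \<forall>j\<in>insert m S. c' n j \<in> H n \<and>
      (\<forall>i\<in>insert m S. inner (a i) (c' n j) = (if i = j then 1 else 0))) sequentially"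
    using ev ev2 QH
  proof (eventually_elim)
    case (elim n)
    have xH: "x n \<in> H n" using elim(3) x_def by simp
    have cH: "c n j \<in> H n" if "j \<in> S" for j using elim(1) that by blast
    have gH: "g n \<in> H n" unfolding g_def using sub xH cH
      by (intro subspace_diff subspace_sum subspace_scale) auto
    have eH: "e n \<in> H n" unfolding e_def using sub gH by (intro subspace_scale) auto
    have ig: "inner (a i) (g n) = 0" if "i \<in> S" for i
    proof -
      have "inner (a i) (\<Sum>j\<in>S. inner (a j) (x n) *\<^sub>R c n j) = (\<Sum>j\<in>S. inner (a j) (x n) * inner (a i) (c n j))"
        by (simp add: inner_sum_right)
      also have "\<dots> = (\<Sum>j\<in>S. inner (a j) (x n) * (if i = j then 1 else 0))"
        using elim(1) that by (intro sum.cong) auto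
      also have "\<dots> = inner (a i) (x n)" by (rule delta_sum[OF insert.hyps(1) that])
      finally show ?thesis unfolding g_def by (simp add: inner_diff_right)
    qed
    have ie: "inner (a i) (e n) = 0" if "i \<in> S" for i
      unfolding e_def using ig[OF that] by simp
    have iem: "inner (a m) (e n) = 1" unfolding e_def using elim(2) by (simp add: dn_def)
    show ?case
    proof (intro ballI conjI)
      fix j assume j: "j \<in> insert m S"
      show "c' n j \<in> H n" unfolding c'_def using eH cH j sub
        by (auto intro!: subspace_diff subspace_scale)
      fix i assume i: "i \<in> insert m S"
      show "inner (a i) (c' n j) = (if i = j then 1 else 0)"
      proof (cases "j = m")
        case True
        then show ?thesis using i ie iem insert.hyps(2) unfolding c'_def by auto
      next
        case jm: False
        then have jS: "j \<in> S" using j by auto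
        show ?thesis
        proof (cases "i = m")
          case True
          then show ?thesis using jm iem unfolding c'_def by (simp add: inner_diff_right)
        next
          case False
          then have "i \<in> S" using i by auto
          then show ?thesis using jm ie elim(1) jS unfolding c'_def by (simp add: inner_diff_right)
        qed
      qed
    qed
  qed
  ultimately show ?case by blast
qed



lemma delta_sum': "finite S \<Longrightarrow> j \<in> S \<Longrightarrow> (\<Sum>k\<in>S. f k * (if k = j then 1 else 0)) = (f j::real)"
proof -
  assume "finite S" "j \<in> S"
  have "(\<Sum>k\<in>S. f k * (if k = j then 1 else 0)) = (\<Sum>k\<in>S. if k = j then f k else 0)"
    by (intro sum.cong) auto
  also have "\<dots> = f j" using \<open>finite S\<close> \<open>j \<in> S\<close> by (simp add: sum.delta')
  finally show ?thesis .
qed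

lemma mult_sgn_self: "(x::real) * sgn x = \<bar>x\<bar>"
  by (cases "x > 0"; cases "x = 0") (auto simp: sgn_if)

theorem lemma3:
  fixes A :: "'h::{real_inner, complete_space} \<Rightarrow> (nat \<Rightarrow> real)"
    and As :: "(nat \<Rightarrow> real) \<Rightarrow> 'h"
    and Hn :: "nat \<Rightarrow> 'h set"
    and f :: 'h and ud :: "nat \<Rightarrow> real" and vd :: 'h
  assumes A_bl: "bounded_linear_c0 A"
    and adj: "is_adjoint A As"
    and A_inj: "inj A"
    and As_inj: "inj_on As l1"
    and Hn_sub: "\<And>n. subspace (Hn n)"
    and Hn_dim: "\<And>n. dim (Hn n) = n"
    and Pn_conv: "\<And>v. (\<lambda>n. orth_proj (Hn n) v) \<longlonglongrightarrow> v"
    and ud_l1: "ud \<in> l1"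
    and f_eq: "As ud = f"
    and vd_bd: "\<And>i. \<bar>A vd i\<bar> \<le> 1"
    and vd_sign: "\<And>i. ud i \<noteq> 0 \<Longrightarrow> A vd i = sgn (ud i)"
    and vd_supp: "\<And>i. \<bar>A vd i\<bar> = 1 \<longleftrightarrow> i \<in> supp ud"
  shows "\<exists>n0::nat. \<forall>n\<ge>n0.
     (\<forall>u. is_l1_min (\<lambda>w. orth_proj (Hn n) (As w) = orth_proj (Hn n) f) u \<longleftrightarrow> u = ud) \<and>
     (\<exists>v\<in>Hn n. (\<forall>i. \<bar>A v i\<bar> \<le> 1) \<and> (\<forall>i. \<bar>A v i\<bar> = 1 \<longleftrightarrow> i \<in> supp ud) \<and>
        eps A ud v \<ge> eps A ud vd / 2)"
proof -
  obtain C where Cb: "\<And>v i. \<bar>A v i\<bar> \<le> C * norm v"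
    using A_bl unfolding bounded_linear_c0_def by blast
  define K where "K = \<bar>C\<bar> + 1"
  have Kpos: "K > 0" unfolding K_def by simp
  have Kb: "\<bar>A v i\<bar> \<le> K * norm v" for v i
  proof -
    have "C * norm v \<le> K * norm v" unfolding K_def by (intro mult_right_mono) auto
    then show ?thesis using Cb[of v i] by linarith
  qed
  have fin_sum: "(\<Sum>k. u k * A z k) = (\<Sum>k\<in>T. u k * A z k)"
    if "finite T" "\<And>k. k \<notin> T \<Longrightarrow> u k = 0" for u z T
    using that by (intro suminf_finite) auto
  have l1_fin: "u \<in> l1" if "finite T" "\<And>k. k \<notin> T \<Longrightarrow> u k = 0" for u T
    unfolding l1_def using that by (auto intro!: summable_finite[of T])
  define ev where "ev i = (\<lambda>k::nat. if k = i then 1 else (0::real))" for i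
  define a where "a i = As (ev i)" for i
  have evl1: "ev i \<in> l1" for i by (rule l1_fin[of "{i}"]) (auto simp: ev_def)
  have aA: "A z i = inner (a i) z" for z i
  proof -
    have "inner (a i) z = (\<Sum>k. ev i k * A z k)" using adj evl1 unfolding is_adjoint_def a_def by blast
    also have "\<dots> = (\<Sum>k\<in>{i}. ev i k * A z k)" by (rule fin_sum) (auto simp: ev_def)
    finally show ?thesis by (simp add: ev_def)
  qed
  have zl1: "(\<lambda>_. 0) \<in> l1" by (rule l1_fin[of "{}"]) auto
  have As0: "As (\<lambda>_. 0) = 0"
  proof -
    have "inner (As (\<lambda>_. 0)) (As (\<lambda>_. 0)) = (\<Sum>k. 0 * A (As (\<lambda>_. 0)) k)"
      using adj zl1 unfolding is_adjoint_def by blast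
    then show ?thesis by simp
  qed
  have indep: "indep_on a T" if finT: "finite T" for T
    unfolding indep_on_def
  proof (intro allI impI)
    fix c assume z: "(\<Sum>i\<in>T. c i *\<^sub>R a i) = 0"
    define u where "u k = (if k \<in> T then c k else 0)" for k
    have ul1: "u \<in> l1" by (rule l1_fin[OF finT]) (auto simp: u_def)
    have "inner (As u) z' = 0" for z'
    proof -
      have "inner (As u) z' = (\<Sum>k. u k * A z' k)" using adj ul1 unfolding is_adjoint_def by blast
      also have "\<dots> = (\<Sum>k\<in>T. u k * A z' k)" by (rule fin_sum[OF finT]) (auto simp: u_def)
      also have "\<dots> = (\<Sum>k\<in>T. c k * inner (a k) z')" by (intro sum.cong) (auto simp: u_def aA)
      also have "\<dots> = inner (\<Sum>i\<in>T. c i *\<^sub>R a i) z'" by (simp add: inner_sum_left)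
      finally show ?thesis using z by simp
    qed
    then have "As u = 0" by (metis inner_eq_zero_iff)
    then have "u = (\<lambda>_. 0)" using As_inj ul1 zl1 As0 unfolding inj_on_def by metis
    then show "\<forall>i\<in>T. c i = 0" unfolding u_def by (metis (mono_tags))
  qed
  define S where "S = supp ud"
  have Sdef: "i \<in> S \<longleftrightarrow> \<bar>A vd i\<bar> = 1" for i using vd_supp S_def by simp
  have udS: "ud i = 0" if "i \<notin> S" for i using that unfolding S_def supp_def by simp
  have Avd0: "(\<lambda>i. A vd i) \<longlonglongrightarrow> 0" using A_bl unfolding bounded_linear_c0_def c0_def by auto
  obtain N1 where N1: "\<And>i. i \<ge> N1 \<Longrightarrow> \<bar>A vd i\<bar> < 1/2"
    using Avd0 unfolding LIMSEQ_iff by (metis diff_zero half_gt_zero real_norm_def zero_less_one)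
  have SN: "S \<subseteq> {..<N1}"
  proof
    fix i assume "i \<in> S"
    then have "\<bar>A vd i\<bar> = 1" using Sdef by simp
    then show "i \<in> {..<N1}" using N1[of i] by (cases "i \<ge> N1") auto
  qed
  have finS: "finite S" using SN finite_subset by blast
  define Bset where "Bset = insert (1/2) ((\<lambda>i. \<bar>A vd i\<bar>) ` ({..<N1} - S))"
  define M where "M = Max Bset"
  have finB: "finite Bset" "Bset \<noteq> {}" unfolding Bset_def by auto
  have Mlt: "M < 1" unfolding M_def
  proof (subst Max_less_iff[OF finB], intro ballI)
    fix x assume "x \<in> Bset"
    then show "x < 1" unfolding Bset_def using vd_bd Sdef
      by (auto simp: order.strict_iff_order)
  qed
  have Mge: "x \<le> M" if "x \<in> Bset" for x using Max_ge[OF finB(1) that] M_def by simp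
  define SS where "SS v = insert 0 ((\<lambda>i. \<bar>A v i\<bar>) ` (- supp ud))" for v
  have SSle: "Sup (SS v) \<le> B" if "0 \<le> B" "\<And>i. i \<notin> S \<Longrightarrow> \<bar>A v i\<bar> \<le> B" for v B
    unfolding SS_def using that S_def by (intro cSup_least) auto
  have SSge: "x \<le> Sup (SS v)" if "x \<in> SS v" "\<And>i. i \<notin> S \<Longrightarrow> \<bar>A v i\<bar> \<le> B" "0 \<le> B" for v B x
  proof (rule cSup_upper[OF that(1)])
    show "bdd_above (SS v)" unfolding bdd_above_def SS_def using that(2,3) S_def by auto
  qed
  define \<epsilon> where "\<epsilon> = eps A ud vd"
  have epsSS: "eps A ud v = 1 - Sup (SS v)" for v unfolding eps_def SS_def by simp
  have "Sup (SS vd) \<le> M"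
  proof (rule SSle)
    show "0 \<le> M" using Mge[of "1/2"] unfolding Bset_def by simp
    fix i assume i: "i \<notin> S"
    show "\<bar>A vd i\<bar> \<le> M"
    proof (cases "i < N1")
      case True then show ?thesis using i by (intro Mge) (auto simp: Bset_def)
    next
      case False then show ?thesis using N1[of i] Mge[of "1/2"] by (auto simp: Bset_def)
    qed
  qed
  then have epos: "\<epsilon> > 0" using Mlt epsSS \<epsilon>_def by simp
  have "0 \<le> Sup (SS vd)" by (rule SSge[of _ _ 1]) (auto simp: SS_def vd_bd)
  then have ele1: "\<epsilon> \<le> 1" using epsSS \<epsilon>_def by simp
  have vdoff: "\<bar>A vd i\<bar> \<le> 1 - \<epsilon>" if "i \<notin> S" for i
  proof -
    have "\<bar>A vd i\<bar> \<le> Sup (SS vd)" by (rule SSge[of _ _ 1]) (use that S_def in \<open>auto simp: SS_def vd_bd\<close>)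
    then show ?thesis using epsSS \<epsilon>_def by simp
  qed
  define Q where "Q n = orth_proj (Hn n)" for n
  have QP: "Q n x \<in> Hn n \<and> (\<forall>w\<in>Hn n. inner (x - Q n x) w = 0)" if "n \<ge> 1" for n x
    unfolding Q_def using orth_proj_fin[OF Hn_sub Hn_dim that] by blast
  have QH: "eventually (\<lambda>n. \<forall>x. Q n x \<in> Hn n) sequentially"
    unfolding eventually_sequentially using QP by blast
  obtain c b where lcb: "\<forall>j\<in>S. lc a S (b j)" and cb: "\<forall>j\<in>S. (\<lambda>n. c n j) \<longlonglongrightarrow> b j"
    and evc: "eventually (\<lambda>n. \<forall>j\<in>S. c n j \<in> Hn n \<and> (\<forall>i\<in>S. inner (a i) (c n j) = (if i = j then 1 else 0))) sequentially"
    using dual_seq[OF finS Hn_sub QH Pn_conv[unfolded Q_def[symmetric]] indep[OF finS]] by blast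
  define s where "s j = sgn (ud j)" for j
  have sA: "A vd j = s j" if "j \<in> S" for j using that vd_sign unfolding S_def supp_def s_def by simp
  have sabs: "\<bar>s j\<bar> = 1" if "j \<in> S" for j using that unfolding S_def supp_def s_def by (simp add: abs_sgn)
  define wn where "wn n = Q n vd" for n
  define vn where "vn n = wn n + (\<Sum>j\<in>S. (s j - inner (a j) (wn n)) *\<^sub>R c n j)" for n
  have wl: "wn \<longlonglongrightarrow> vd" unfolding wn_def Q_def by (rule Pn_conv)
  have sl: "(\<lambda>n. \<Sum>j\<in>S. (s j - inner (a j) (wn n)) *\<^sub>R c n j) \<longlonglongrightarrow> (\<Sum>j\<in>S. (s j - inner (a j) vd) *\<^sub>R b j)"
    using cb by (intro tendsto_intros wl) auto
  have "(\<Sum>j\<in>S. (s j - inner (a j) vd) *\<^sub>R b j) = 0"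
    by (intro sum.neutral ballI) (simp add: sA aA[symmetric])
  then have vl: "vn \<longlonglongrightarrow> vd" unfolding vn_def using tendsto_add[OF wl sl] by simp
  define \<eta> where "\<eta> = \<epsilon> / (2 * K)"
  have etapos: "\<eta> > 0" unfolding \<eta>_def using epos Kpos by simp
  obtain N2 where N2: "\<And>n. n \<ge> N2 \<Longrightarrow> norm (vn n - vd) < \<eta>"
    using vl etapos unfolding LIMSEQ_iff by blast
  obtain N3 where N3: "\<And>n. n \<ge> N3 \<Longrightarrow> \<forall>j\<in>S. c n j \<in> Hn n \<and> (\<forall>i\<in>S. inner (a i) (c n j) = (if i = j then 1 else 0))"
    using evc unfolding eventually_sequentially by blast
  show ?thesis
  proof (intro exI[of _ "max (max N2 N3) 1"] allI impI)
    fix n assume nge: "max (max N2 N3) 1 \<le> n"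
    have n1: "n \<ge> 1" using nge by simp
    have cp: "\<forall>j\<in>S. c n j \<in> Hn n \<and> (\<forall>i\<in>S. inner (a i) (c n j) = (if i = j then 1 else 0))"
      using N3 nge by simp
    have vnorm: "norm (vn n - vd) < \<eta>" using N2 nge by simp
    have wH: "wn n \<in> Hn n" using QP[OF n1] wn_def by simp
    have vH: "vn n \<in> Hn n" unfolding vn_def using wH cp Hn_sub
      by (intro subspace_add subspace_sum subspace_scale) auto
    have vS: "A (vn n) i = s i" if iS: "i \<in> S" for i
    proof -
      have "inner (a i) (\<Sum>j\<in>S. (s j - inner (a j) (wn n)) *\<^sub>R c n j)
          = (\<Sum>j\<in>S. (s j - inner (a j) (wn n)) * inner (a i) (c n j))"
        by (simp add: inner_sum_right)
      also have "\<dots> = (\<Sum>j\<in>S. (s j - inner (a j) (wn n)) * (if i = j then 1 else 0))"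
        using cp iS by (intro sum.cong) auto
      also have "\<dots> = s i - inner (a i) (wn n)" by (rule delta_sum[OF finS iS])
      finally show ?thesis unfolding aA vn_def by (simp add: inner_add_right)
    qed
    have vclose: "\<bar>A (vn n) i - A vd i\<bar> < \<epsilon> / 2" for i
    proof -
      have "A (vn n) i - A vd i = A (vn n - vd) i" by (simp add: aA inner_diff_right)
      also have "\<bar>\<dots>\<bar> \<le> K * norm (vn n - vd)" by (rule Kb)
      also have "\<dots> < K * \<eta>" using vnorm Kpos by simp
      also have "K * \<eta> = \<epsilon> / 2" unfolding \<eta>_def using Kpos by simp
      finally show ?thesis .
    qed
    have voff: "\<bar>A (vn n) i\<bar> < 1 - \<epsilon> / 2" if "i \<notin> S" for i
      using vclose[of i] vdoff[OF that] by linarith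
    have bd1: "\<bar>A (vn n) i\<bar> \<le> 1" for i
      using voff[of i] vS[of i] sabs[of i] epos by (cases "i \<in> S") auto
    have iff1: "\<bar>A (vn n) i\<bar> = 1 \<longleftrightarrow> i \<in> supp ud" for i
      using voff[of i] vS[of i] sabs[of i] epos S_def by (cases "i \<in> S") auto
    have epsv: "eps A ud (vn n) \<ge> eps A ud vd / 2"
    proof -
      have "Sup (SS (vn n)) \<le> 1 - \<epsilon> / 2"
        using ele1 voff by (intro SSle) (auto simp: less_imp_le)
      then show ?thesis using epsSS[of "vn n"] \<epsilon>_def by simp
    qed
    define P where "P = orth_proj (Hn n)"
    have feas_inner: "inner (As w) x = inner f x"
      if "P (As w) = P f" "x \<in> Hn n" for w x
    proof -
      have o1: "inner (As w - P (As w)) x = 0" using QP[OF n1] that(2) unfolding Q_def P_def by blast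
      have o2: "inner (f - P f) x = 0" using QP[OF n1] that(2) unfolding Q_def P_def by blast
      show ?thesis using o1 o2 that(1) by (simp add: inner_diff_left)
    qed
    have key1: "(\<Sum>k. w k * A (vn n) k) = inner f (vn n)" if "w \<in> l1" "P (As w) = P f" for w
    proof -
      have "inner (As w) (vn n) = (\<Sum>k. w k * A (vn n) k)" using adj that(1) unfolding is_adjoint_def by blast
      then show ?thesis using feas_inner[OF that(2) vH] by simp
    qed
    have nb: "norm (w k * A (vn n) k) \<le> \<bar>w k\<bar>" for w k
    proof -
      have "\<bar>w k\<bar> * \<bar>A (vn n) k\<bar> \<le> \<bar>w k\<bar> * 1" by (rule mult_left_mono[OF bd1]) simp
      then show ?thesis by (simp add: abs_mult)
    qed
    have summ: "summable (\<lambda>k. w k * A (vn n) k)" if "w \<in> l1" for w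
    proof (rule summable_comparison_test)
      show "summable (\<lambda>k. \<bar>w k\<bar>)" using that unfolding l1_def by simp
      show "\<exists>N. \<forall>k\<ge>N. norm (w k * A (vn n) k) \<le> \<bar>w k\<bar>"
        using nb by blast
    qed
    have le1: "inner f (vn n) \<le> norm1 w" if "w \<in> l1" "P (As w) = P f" for w
    proof -
      have "(\<Sum>k. w k * A (vn n) k) \<le> (\<Sum>k. \<bar>w k\<bar>)"
      proof (rule suminf_le)
        show "summable (\<lambda>k. w k * A (vn n) k)" by (rule summ[OF that(1)])
        show "summable (\<lambda>k. \<bar>w k\<bar>)" using that(1) unfolding l1_def by simp
        fix k show "w k * A (vn n) k \<le> \<bar>w k\<bar>" using nb[of w k] by simp
      qed
      then show ?thesis using key1[OF that] unfolding norm1_def by simp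
    qed
    have ud_feas: "P (As ud) = P f" using f_eq by simp
    have norm_ud: "norm1 ud = inner f (vn n)"
    proof -
      have "norm1 ud = (\<Sum>k\<in>S. \<bar>ud k\<bar>)" unfolding norm1_def
        by (rule suminf_finite[OF finS]) (simp add: udS)
      also have "\<dots> = (\<Sum>k\<in>S. ud k * A (vn n) k)"
        by (intro sum.cong) (auto simp: vS s_def mult_sgn_self)
      also have "\<dots> = (\<Sum>k. ud k * A (vn n) k)" by (rule fin_sum[symmetric, OF finS]) (simp add: udS)
      also have "\<dots> = inner f (vn n)" by (rule key1[OF ud_l1 ud_feas])
      finally show ?thesis .
    qed
    have ud_min: "is_l1_min (\<lambda>w. P (As w) = P f) ud"
      unfolding is_l1_min_def using ud_l1 ud_feas le1 norm_ud by simp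
    have uniq: "u = ud" if um: "is_l1_min (\<lambda>w. P (As w) = P f) u" for u
    proof -
      have ul1: "u \<in> l1" and uf: "P (As u) = P f" and ule: "norm1 u \<le> norm1 ud"
        using um ud_l1 ud_feas unfolding is_l1_min_def by auto
      have sabsu: "summable (\<lambda>k. \<bar>u k\<bar>)" using ul1 unfolding l1_def by simp
      have "(\<Sum>k. \<bar>u k\<bar> - u k * A (vn n) k) = (\<Sum>k. \<bar>u k\<bar>) - (\<Sum>k. u k * A (vn n) k)"
        by (rule suminf_diff[OF sabsu summ[OF ul1], symmetric])
      also have "\<dots> = norm1 u - inner f (vn n)" unfolding norm1_def key1[OF ul1 uf] ..
      also have "\<dots> \<le> 0" using ule norm_ud by simp
      finally have s0: "(\<Sum>k. \<bar>u k\<bar> - u k * A (vn n) k) \<le> 0" .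
      have nn: "0 \<le> \<bar>u k\<bar> - u k * A (vn n) k" for k
      proof -
        have "u k * A (vn n) k \<le> \<bar>u k\<bar> * \<bar>A (vn n) k\<bar>" by (metis abs_ge_self abs_mult)
        also have "\<dots> \<le> \<bar>u k\<bar> * 1" by (rule mult_left_mono[OF bd1]) simp
        finally show ?thesis by simp
      qed
      have smd: "summable (\<lambda>k. \<bar>u k\<bar> - u k * A (vn n) k)"
        by (intro summable_diff sabsu summ[OF ul1])
      have "(\<Sum>k. \<bar>u k\<bar> - u k * A (vn n) k) = 0"
        using s0 suminf_nonneg[OF smd nn] by simp
      then have eq0: "\<And>k. \<bar>u k\<bar> - u k * A (vn n) k = 0"
        using suminf_eq_zero_iff[OF smd nn] by blast
      have uS: "u k = 0" if "k \<notin> S" for k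
      proof (rule ccontr)
        assume nz: "u k \<noteq> 0"
        have "\<bar>u k\<bar> = u k * A (vn n) k" using eq0[of k] by simp
        also have "\<dots> \<le> \<bar>u k\<bar> * \<bar>A (vn n) k\<bar>" by (metis abs_ge_self abs_mult)
        also have "\<dots> < \<bar>u k\<bar> * 1" using nz voff[OF that] epos
          by (intro mult_strict_left_mono) auto
        finally show False by simp
      qed
      have uj: "u j = ud j" if jS: "j \<in> S" for j
      proof -
        have cH: "c n j \<in> Hn n" using cp jS by blast
        have ev1: "(\<Sum>k. w k * A (c n j) k) = w j" if "w \<in> l1" "\<And>k. k \<notin> S \<Longrightarrow> w k = 0" for w
        proof -
          have "(\<Sum>k. w k * A (c n j) k) = (\<Sum>k\<in>S. w k * A (c n j) k)" by (rule fin_sum[OF finS that(2)])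
          also have "\<dots> = (\<Sum>k\<in>S. w k * (if k = j then 1 else 0))"
            using cp jS by (intro sum.cong) (auto simp: aA)
          also have "\<dots> = w j" by (rule delta_sum'[OF finS jS])
          finally show ?thesis .
        qed
        have "u j = inner (As u) (c n j)" using adj ul1 ev1[OF ul1 uS] unfolding is_adjoint_def by metis
        also have "\<dots> = inner f (c n j)" using feas_inner[OF uf cH] .
        also have "\<dots> = inner (As ud) (c n j)" using f_eq by simp
        also have "\<dots> = ud j" using adj ud_l1 ev1[OF ud_l1 udS] unfolding is_adjoint_def by metis
        finally show ?thesis .
      qed
      show "u = ud"
      proof
        fix k show "u k = ud k" using uS udS uj by (cases "k \<in> S") auto
      qed
    qed
    show "(\<forall>u. is_l1_min (\<lambda>w. orth_proj (Hn n) (As w) = orth_proj (Hn n) f) u \<longleftrightarrow> u = ud) \<and>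
     (\<exists>v\<in>Hn n. (\<forall>i. \<bar>A v i\<bar> \<le> 1) \<and> (\<forall>i. \<bar>A v i\<bar> = 1 \<longleftrightarrow> i \<in> supp ud) \<and>
        eps A ud v \<ge> eps A ud vd / 2)"
      using ud_min uniq vH bd1 iff1 epsv unfolding P_def by blast
  qed
qed


end
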